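(* Let $\mathfrak g=\mathfrak r_3$, the Lie algebra with basis $\{e_1,e_2,e_3\}$ and nonzero brackets $[e_1,e_2]=e_2+e_3$, $[e_1,e_3]=e_3$, identified with $\mathbb R^3$ via this basis. Then $$U=\left\{\begin{pmatrix}1&0&0\\0&1&0\\0&0&1/\lambda\end{pmatrix}:\lambda>0\right\}$$ is a set of representatives of $\mathcal{PM}(\mathfrak g)$.
   Context: $\mathcal M(\mathfrak g)$ is the set of inner products on $\mathfrak g\cong\mathbb R^3$, with $\mathrm{GL}_3(\mathbb R)$-action $g.\langle\cdot,\cdot\rangle=\langle g^{-1}\cdot,g^{-1}\cdot\rangle$; $\langle\cdot,\cdot\rangle_0$ makes $\{e_1,e_2,e_3\}$ orthonormal. Two inner products are isometric up to scaling if $\langle\cdot,\cdot\rangle_1=k\langle f\cdot,f\cdot\rangle_2$ for some $k>0$ and Lie algebra automorphism $f$; $[\langle\cdot,\cdot\rangle]$ denotes the equivalence class and $\mathcal{PM}(\mathfrak g)$ the set of classes. A subset $U\subset\mathrm{GL}_3(\mathbb R)$ is a set of representatives of $\mathcal{PM}(\mathfrak g)$ if $\mathcal{PM}(\mathfrak g)=\{[h.\langle\cdot,\cdot\rangle_0]: h\in U\}$. *)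

theory Defs
  imports "HOL-Analysis.Analysis"
begin

definition e1 :: "real^3" where "e1 = axis 1 1"
definition e2 :: "real^3" where "e2 = axis 2 1"
definition e3 :: "real^3" where "e3 = axis 3 1"

abbreviation c1 :: "real^3 \<Rightarrow> real" where "c1 x \<equiv> x $ 1"
abbreviation c2 :: "real^3 \<Rightarrow> real" where "c2 x \<equiv> x $ 2"
abbreviation c3 :: "real^3 \<Rightarrow> real" where "c3 x \<equiv> x $ 3"

text \<open>The bilinear, antisymmetric extension of \<open>[e1,e2] = e2 + e3\<close>, \<open>[e1,e3] = e3\<close>,
  \<open>[e2,e3] = 0\<close>.\<close>
definition r3_bracket :: "real^3 \<Rightarrow> real^3 \<Rightarrow> real^3" where
  "r3_bracket x y =
     (c1 x * c2 y - c2 x * c1 y) *\<^sub>R (e2 + e3) + (c1 x * c3 y - c3 x * c1 y) *\<^sub>R e3"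

definition r3_aut :: "(real^3 \<Rightarrow> real^3) \<Rightarrow> bool" where
  "r3_aut f \<longleftrightarrow> linear f \<and> bij f \<and> (\<forall>x y. f (r3_bracket x y) = r3_bracket (f x) (f y))"

definition is_inner_prod :: "(real^3 \<Rightarrow> real^3 \<Rightarrow> real) \<Rightarrow> bool" where
  "is_inner_prod B \<longleftrightarrow> bilinear B \<and> (\<forall>x y. B x y = B y x) \<and> (\<forall>x. x \<noteq> 0 \<longrightarrow> B x x > 0)"

definition ip0 :: "real^3 \<Rightarrow> real^3 \<Rightarrow> real" where
  "ip0 x y = x \<bullet> y"

definition gl_act :: "real^3^3 \<Rightarrow> (real^3 \<Rightarrow> real^3 \<Rightarrow> real) \<Rightarrow> (real^3 \<Rightarrow> real^3 \<Rightarrow> real)" where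
  "gl_act g B = (\<lambda>x y. B (matrix_inv g *v x) (matrix_inv g *v y))"

definition iso_scale :: "(real^3 \<Rightarrow> real^3 \<Rightarrow> real) \<Rightarrow> (real^3 \<Rightarrow> real^3 \<Rightarrow> real) \<Rightarrow> bool" where
  "iso_scale B1 B2 \<longleftrightarrow> (\<exists>k>0. \<exists>f. r3_aut f \<and> (\<forall>x y. B1 x y = k * B2 (f x) (f y)))"

definition ip_class :: "(real^3 \<Rightarrow> real^3 \<Rightarrow> real) \<Rightarrow> (real^3 \<Rightarrow> real^3 \<Rightarrow> real) set" where
  "ip_class B = {B'. is_inner_prod B' \<and> iso_scale B' B}"

definition PM :: "(real^3 \<Rightarrow> real^3 \<Rightarrow> real) set set" where
  "PM = {ip_class B | B. is_inner_prod B}"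

definition is_set_of_reps :: "(real^3^3) set \<Rightarrow> bool" where
  "is_set_of_reps U \<longleftrightarrow> U \<subseteq> {g. invertible g} \<and> PM = (\<lambda>h. ip_class (gl_act h ip0)) ` U"

definition U_r3 :: "(real^3^3) set" where
  "U_r3 = {(\<chi> i j. if i = j then (if i = 3 then 1 / lam else 1) else 0) | lam::real. lam > 0}"

end

theory Submission
  imports Defs
begin

lemma vec3_exp: "(x::real^3) = x$1 *\<^sub>R axis 1 1 + x$2 *\<^sub>R axis 2 1 + x$3 *\<^sub>R axis 3 1"
  by (simp add: vec_eq_iff forall_3 axis_def)

lemma bil_exp:
  fixes B :: "real^3 \<Rightarrow> real^3 \<Rightarrow> real"
  assumes "bilinear B"
  shows "B x y = (\<Sum>i\<in>UNIV. \<Sum>j\<in>UNIV. x$i * y$j * B (axis i 1) (axis j 1))"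
proof -
  have "B x y = B (x$1 *\<^sub>R axis 1 1 + x$2 *\<^sub>R axis 2 1 + x$3 *\<^sub>R axis 3 1)
     (y$1 *\<^sub>R axis 1 1 + y$2 *\<^sub>R axis 2 1 + y$3 *\<^sub>R axis 3 1)"
    using vec3_exp[of x] vec3_exp[of y] by simp
  also have "\<dots> = (\<Sum>i\<in>UNIV. \<Sum>j\<in>UNIV. x$i * y$j * B (axis i 1) (axis j 1))"
    by (simp add: bilinear_ladd[OF assms] bilinear_radd[OF assms] bilinear_lmul[OF assms]
        bilinear_rmul[OF assms] sum_3 algebra_simps)
  finally show ?thesis .
qed

lemma matrix_inv_eq:
  fixes A :: "real^3^3"
  assumes "A ** H = mat 1" "H ** A = mat 1"
  shows "matrix_inv A = H"
proof -
  have ex: "\<exists>A'. A ** A' = mat 1 \<and> A' ** A = mat 1" using assms by blast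
  let ?M = "matrix_inv A"
  have M: "A ** ?M = mat 1 \<and> ?M ** A = mat 1"
    unfolding matrix_inv_def using someI_ex[OF ex] by blast
  have "?M = ?M ** (A ** H)" using assms by (simp add: matrix_mul_rid)
  also have "\<dots> = (?M ** A) ** H" by (simp add: matrix_mul_assoc)
  also have "\<dots> = H" using M by (simp add: matrix_mul_lid)
  finally show ?thesis .
qed

definition hmat :: "real \<Rightarrow> real^3^3" where
  "hmat lam = (\<chi> i j. if i = j then (if i = 3 then 1 / lam else 1) else 0)"
definition hinv :: "real \<Rightarrow> real^3^3" where
  "hinv lam = (\<chi> i j. if i = j then (if i = 3 then lam else 1) else 0)"

lemma hmat_inv: "lam > 0 \<Longrightarrow> hmat lam ** hinv lam = mat 1 \<and> hinv lam ** hmat lam = mat 1"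
  by (simp add: hmat_def hinv_def matrix_matrix_mult_def mat_def vec_eq_iff forall_3 sum_3)

lemma gl_act_h: "lam > 0 \<Longrightarrow> gl_act (hmat lam) ip0 x y = x$1*y$1 + x$2*y$2 + lam^2 * (x$3*y$3)"
  using hmat_inv[of lam] matrix_inv_eq[of "hmat lam" "hinv lam"]
  by (simp add: gl_act_def ip0_def inner_vec_def sum_3 hinv_def matrix_vector_mult_def power2_eq_square)

lemma gl_inner: assumes "lam > 0" shows "is_inner_prod (gl_act (hmat lam) ip0)"
proof -
  have bl: "bilinear (\<lambda>x y::real^3. x$1*y$1 + x$2*y$2 + lam^2 * (x$3*y$3))"
    unfolding bilinear_def by (auto intro!: linearI simp: algebra_simps)
  have pos: "x$1*x$1 + x$2*x$2 + lam^2 * (x$3*x$3) > 0" if "x \<noteq> 0" for x :: "real^3"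
  proof -
    from that have "x$1 \<noteq> 0 \<or> x$2 \<noteq> 0 \<or> x$3 \<noteq> 0" by (auto simp: vec_eq_iff forall_3)
    moreover have "x$1*x$1 \<ge> 0" "x$2*x$2 \<ge> 0" "lam^2 * (x$3*x$3) \<ge> 0" by auto
    moreover have "x$3 \<noteq> 0 \<Longrightarrow> lam^2 * (x$3*x$3) > 0" using assms by (metis mult_pos_pos not_real_square_gt_zero zero_less_power)
    ultimately show ?thesis by (smt (verit) not_real_square_gt_zero)
  qed
  have eq: "gl_act (hmat lam) ip0 = (\<lambda>x y. x$1*y$1 + x$2*y$2 + lam^2 * (x$3*y$3))"
    using gl_act_h[OF assms] by (intro ext) simp
  show ?thesis unfolding is_inner_prod_def eq using bl pos by (auto simp: algebra_simps)
qed

lemma aut_inv: assumes "r3_aut f" shows "r3_aut (inv f)"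
proof -
  have l: "linear f" and b: "bij f" and h: "\<And>x y. f (r3_bracket x y) = r3_bracket (f x) (f y)"
    using assms by (auto simp: r3_aut_def)
  have "linear (inv f)" using l b by (simp add: bij_is_inj inj_linear_imp_inv_linear)
  moreover have "bij (inv f)" using b by (simp add: bij_imp_bij_inv)
  moreover have "inv f (r3_bracket x y) = r3_bracket (inv f x) (inv f y)" for x y
  proof -
    have fx: "f (inv f x) = x" "f (inv f y) = y" using b by (simp_all add: bij_is_surj surj_f_inv_f)
    have "f (r3_bracket (inv f x) (inv f y)) = r3_bracket x y"
      by (simp only: h fx)
    then have "inv f (r3_bracket x y) = inv f (f (r3_bracket (inv f x) (inv f y)))" by simp
    also have "\<dots> = r3_bracket (inv f x) (inv f y)" using b by (simp add: bij_is_inj inv_f_f)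
    finally show ?thesis .
  qed
  ultimately show ?thesis by (simp add: r3_aut_def)
qed

lemma aut_comp: assumes "r3_aut f" "r3_aut g" shows "r3_aut (g \<circ> f)"
  using assms by (auto simp: r3_aut_def linear_compose bij_comp)

lemma iso_sym: assumes "iso_scale B1 B2" shows "iso_scale B2 B1"
proof -
  obtain k f where k: "k > 0" "r3_aut f" "\<And>x y. B1 x y = k * B2 (f x) (f y)"
    using assms by (auto simp: iso_scale_def)
  have b: "bij f" using k by (simp add: r3_aut_def)
  have "B2 x y = (1/k) * B1 (inv f x) (inv f y)" for x y
  proof -
    have fx: "f (inv f x) = x" "f (inv f y) = y" using b by (simp_all add: bij_is_surj surj_f_inv_f)
    have "B1 (inv f x) (inv f y) = k * B2 x y" using k(3)[of "inv f x" "inv f y"] by (simp only: fx)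
    then show ?thesis using k(1) by simp
  qed
  then show ?thesis using k aut_inv[OF k(2)] unfolding iso_scale_def
    by (intro exI[of _ "1/k"]) auto
qed

lemma iso_trans: assumes "iso_scale B1 B2" "iso_scale B2 B3" shows "iso_scale B1 B3"
proof -
  obtain k f where k: "k > 0" "r3_aut f" "\<And>x y. B1 x y = k * B2 (f x) (f y)"
    using assms by (auto simp: iso_scale_def)
  obtain k' g where k': "k' > 0" "r3_aut g" "\<And>x y. B2 x y = k' * B3 (g x) (g y)"
    using assms by (auto simp: iso_scale_def)
  show ?thesis unfolding iso_scale_def
    using k k' aut_comp[OF k(2) k'(2)]
    by (intro exI[of _ "k*k'"] conjI exI[of _ "g \<circ> f"]) auto
qed

lemma class_eq: assumes "iso_scale B B0" shows "ip_class B = ip_class B0"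
  unfolding ip_class_def using assms iso_trans iso_sym by blast

lemma main_exist:
  assumes B: "is_inner_prod B"
  shows "\<exists>lam>0. iso_scale B (gl_act (hmat lam) ip0)"
proof -
  have bl: "bilinear B" and sym: "\<And>x y. B x y = B y x" and pd: "\<And>x. x \<noteq> 0 \<Longrightarrow> B x x > 0"
    using B by (auto simp: is_inner_prod_def)
  define b11 where "b11 = B (axis 1 1) (axis 1 1)"
  define b12 where "b12 = B (axis 1 1) (axis 2 1)"
  define b13 where "b13 = B (axis 1 1) (axis 3 1)"
  define b22 where "b22 = B (axis 2 1) (axis 2 1)"
  define b23 where "b23 = B (axis 2 1) (axis 3 1)"
  define b33 where "b33 = B (axis 3 1) (axis 3 1)"
  have ex: "B x y = x$1*y$1*b11 + (x$1*y$2 + x$2*y$1)*b12 + (x$1*y$3 + x$3*y$1)*b13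
     + x$2*y$2*b22 + (x$2*y$3+x$3*y$2)*b23 + x$3*y$3*b33" for x y
    unfolding b11_def b12_def b13_def b22_def b23_def b33_def
    by (simp add: bil_exp[OF bl, of x y] sum_3 sym[of "axis 2 1" "axis 1 1"]
       sym[of "axis 3 1" "axis 1 1"] sym[of "axis 3 1" "axis 2 1"] algebra_simps)
  have d3: "b33 > 0" unfolding b33_def by (rule pd) (simp add: axis_eq_0_iff)
  define p where "p = b23 / b33"
  define q where "q = b13 / b33"
  define d2 where "d2 = b22 - b23^2 / b33"
  have "B (vector [0, 1, -p]) (vector [0, 1, -p]) = d2"
    unfolding ex using d3 by (simp add: p_def d2_def field_simps power2_eq_square)
  moreover have "(vector [0, 1, -p] :: real^3) \<noteq> 0" by (simp add: vec_eq_iff forall_3)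
  ultimately have d2: "d2 > 0" using pd by metis
  define m where "m = (b12 - b23*b13/b33) / d2"
  define d1 where "d1 = b11 - d2*m^2 - b13^2/b33"
  have hp: "b23 = b33*p" and hq: "b13 = b33*q" using d3 by (simp_all add: p_def q_def)
  have h22: "b22 = d2 + b33*p^2" using d3 by (simp add: d2_def p_def power2_eq_square)
  have h12: "b12 = d2*m + b33*p*q" using d3 d2 by (simp add: m_def p_def q_def field_simps)
  have h11: "b11 = d1 + d2*m^2 + b33*q^2" by (simp add: d1_def q_def power2_eq_square)
  have id: "B x y = d1*x$1*y$1 + d2*(x$2+m*x$1)*(y$2+m*y$1)
      + b33*(x$3+p*x$2+q*x$1)*(y$3+p*y$2+q*y$1)" for x y
    unfolding ex h11 h12 h22 hp hq by (simp add: algebra_simps power2_eq_square)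
  have "B (vector [1, -m, m*p-q]) (vector [1, -m, m*p-q]) = d1"
    unfolding id by (simp add: algebra_simps)
  moreover have "(vector [1, -m, m*p-q] :: real^3) \<noteq> 0" by (simp add: vec_eq_iff forall_3)
  ultimately have d1: "d1 > 0" using pd by metis
  define a where "a = sqrt (d2/d1)"
  define lam where "lam = sqrt (b33/d2)"
  have a: "a > 0" "a^2 = d2/d1" using d1 d2 by (simp_all add: a_def)
  have lam: "lam > 0" "lam^2 = b33/d2" using d3 d2 by (simp_all add: lam_def)
  define f where "f = (\<lambda>x::real^3. vector [x$1, a*(x$2+m*x$1), a*(x$3+p*x$2+q*x$1)] :: real^3)"
  define g where "g = (\<lambda>y::real^3. vector [y$1, y$2/a - m*y$1, y$3/a - p*(y$2/a - m*y$1) - q*y$1] :: real^3)"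
  have lin: "linear f"
    unfolding f_def by (intro linearI) (simp_all add: vec_eq_iff forall_3 algebra_simps)
  have "g \<circ> f = id" "f \<circ> g = id"
    using a(1) by (auto simp: f_def g_def vec_eq_iff forall_3 field_simps)
  then have bij: "bij f" by (rule o_bij)
  have br: "f (r3_bracket x y) = r3_bracket (f x) (f y)" for x y
    by (simp add: f_def r3_bracket_def e1_def e2_def e3_def vec_eq_iff forall_3 axis_def algebra_simps)
  have aut: "r3_aut f" using lin bij br by (simp add: r3_aut_def)
  have "B x y = d1 * gl_act (hmat lam) ip0 (f x) (f y)" for x y
  proof -
    have e1: "d1 * a^2 = d2" using a d1 by simp
    have e2: "d1 * (lam^2 * a^2) = b33" using a lam d1 d2 by simp
    show ?thesis unfolding gl_act_h[OF lam(1)] id f_def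
      by (simp add: algebra_simps e1[symmetric] e2[symmetric] power2_eq_square)
  qed
  then have "iso_scale B (gl_act (hmat lam) ip0)"
    unfolding iso_scale_def using d1 aut by blast
  then show ?thesis using lam(1) by blast
qed

theorem proposition3p8:
  shows "is_set_of_reps U_r3"
proof -
  have U: "U_r3 = hmat ` {lam. lam > 0}"
    unfolding U_r3_def hmat_def by auto
  have inv: "U_r3 \<subseteq> {g. invertible g}"
    unfolding U invertible_def using hmat_inv by blast
  have "PM \<subseteq> (\<lambda>h. ip_class (gl_act h ip0)) ` U_r3"
  proof
    fix C assume "C \<in> PM"
    then obtain B where B: "is_inner_prod B" "C = ip_class B" by (auto simp: PM_def)
    obtain lam where "lam > 0" "iso_scale B (gl_act (hmat lam) ip0)" using main_exist[OF B(1)] by blast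
    then show "C \<in> (\<lambda>h. ip_class (gl_act h ip0)) ` U_r3"
      unfolding U using B class_eq by blast
  qed
  moreover have "(\<lambda>h. ip_class (gl_act h ip0)) ` U_r3 \<subseteq> PM"
    unfolding U PM_def using gl_inner by blast
  ultimately show ?thesis unfolding is_set_of_reps_def using inv by blast
qed

end
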